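(* Let $X$ be a real Hilbert space, $I$ a finite index set, and $(T_i)_{i\in I}$ a family of operators $X\to X$ such that each $T_i$ is averaged nonexpansive and boundedly linearly regular. Set $Z_i=\operatorname{Fix}T_i$ and suppose $Z=\bigcap_{i\in I}Z_i\neq\varnothing$ and that the family $(Z_i)_{i\in I}$ is boundedly linearly regular. Let $(\omega_{i,n})_{(i,n)\in I\times\mathbb N}$ satisfy $\omega_{i,n}\in[0,1]$ and $\sum_{i\in I}\omega_{i,n}=1$ for every $n\in\mathbb N$. Set $I_n=\{i\in I:\omega_{i,n}>0\}$ and suppose $\omega_+=\inf_{n\in\mathbb N}\min_{i\in I_n}\omega_{i,n}>0$. Suppose there is $p\in\{1,2,\dots\}$ such that $I_n\cup I_{n+1}\cup\cdots\cup I_{n+p-1}=I$ for all $n\in\mathbb N$. Let $x_0\in X$ and define $x_{n+1}=\sum_{i\in I}\omega_{i,n}T_ix_n$. Then $(x_n)_{n\in\mathbb N}$ converges linearly to some point of $Z$.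
   Context: $T\colon X\to X$ is averaged nonexpansive if $T=(1-\lambda)\mathrm{Id}+\lambda N$ for some $\lambda\in[0,1[$ and some nonexpansive $N\colon X\to X$. An operator $T$ with $\operatorname{Fix}T\neq\varnothing$ is boundedly linearly regular if for every $\rho>0$ there is $\kappa\ge0$ with $d_{\operatorname{Fix}T}(x)\le\kappa\|x-Tx\|$ for all $x$ with $\|x\|\le\rho$. A finite family $(C_i)_{i\in I}$ of closed convex sets with $C=\bigcap_i C_i\ne\varnothing$ is boundedly linearly regular if for every $\rho>0$ there is $\mu>0$ with $d_C(x)\le\mu\max_{i\in I}d_{C_i}(x)$ for all $\|x\|\le\rho$. Here $d_C$ denotes the distance function to $C$. A sequence $(x_n)$ converges linearly to $\bar x$ if there are $c\ge0$ and $q\in[0,1[$ with $\|x_n-\bar x\|\le cq^n$ for all $n$. *)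

theory Defs
  imports "HOL-Analysis.Analysis"
begin

definition nonexpansive :: "('a::real_normed_vector \<Rightarrow> 'a) \<Rightarrow> bool" where
  "nonexpansive N \<longleftrightarrow> (\<forall>x y. norm (N x - N y) \<le> norm (x - y))"

definition averaged_nonexpansive :: "('a::real_normed_vector \<Rightarrow> 'a) \<Rightarrow> bool" where
  "averaged_nonexpansive T \<longleftrightarrow>
     (\<exists>l::real. 0 \<le> l \<and> l < 1 \<and> (\<exists>N. nonexpansive N \<and> T = (\<lambda>x. (1 - l) *\<^sub>R x + l *\<^sub>R N x)))"

definition Fix :: "('a \<Rightarrow> 'a) \<Rightarrow> 'a set" where
  "Fix T = {x. T x = x}"

definition bdd_lin_reg_op :: "('a::real_normed_vector \<Rightarrow> 'a) \<Rightarrow> bool" where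
  "bdd_lin_reg_op T \<longleftrightarrow> Fix T \<noteq> {} \<and>
     (\<forall>\<rho>>0. \<exists>\<kappa>\<ge>0. \<forall>x. norm x \<le> \<rho> \<longrightarrow> infdist x (Fix T) \<le> \<kappa> * norm (x - T x))"

definition bdd_lin_reg_family :: "'i set \<Rightarrow> ('i \<Rightarrow> 'a::real_normed_vector set) \<Rightarrow> bool" where
  "bdd_lin_reg_family I C \<longleftrightarrow> finite I \<and> I \<noteq> {} \<and> (\<forall>i\<in>I. closed (C i) \<and> convex (C i)) \<and>
     (\<Inter>i\<in>I. C i) \<noteq> {} \<and>
     (\<forall>\<rho>>0. \<exists>\<mu>>0. \<forall>x. norm x \<le> \<rho> \<longrightarrow>
        infdist x (\<Inter>i\<in>I. C i) \<le> \<mu> * (MAX i\<in>I. infdist x (C i)))"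

definition converges_linearly :: "(nat \<Rightarrow> 'a::real_normed_vector) \<Rightarrow> 'a \<Rightarrow> bool" where
  "converges_linearly x xbar \<longleftrightarrow>
     (\<exists>c\<ge>0. \<exists>q::real. 0 \<le> q \<and> q < 1 \<and> (\<forall>n. norm (x n - xbar) \<le> c * q ^ n))"

end

theory Submission imports Defs begin

lemma infdist_ge:
  assumes "Z \<noteq> {}" "\<And>z. z \<in> Z \<Longrightarrow> a \<le> dist y z"
  shows "a \<le> infdist y Z"
  using assms unfolding infdist_notempty[OF assms(1)] by (auto intro: cINF_greatest)

lemma infdist_ge_sq:
  assumes "Z \<noteq> {}" "0 \<le> a" "\<And>z. z \<in> Z \<Longrightarrow> a \<le> (dist y z)^2"
  shows "a \<le> (infdist y Z)^2"
proof -
  have "sqrt a \<le> infdist y Z"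
    by (rule infdist_ge[OF assms(1)]) (metis assms(3) real_le_lsqrt zero_le_dist)
  then show ?thesis using assms(2)
    by (metis real_sqrt_le_iff real_sqrt_pow2 real_sqrt_unique infdist_nonneg power_mono)
qed

lemma jensen_sq:
  fixes a w :: "'i \<Rightarrow> real"
  assumes "finite I" "\<forall>i\<in>I. 0 \<le> w i" "(\<Sum>i\<in>I. w i) = 1"
  shows "(\<Sum>i\<in>I. w i * a i)^2 \<le> (\<Sum>i\<in>I. w i * (a i)^2)"
proof -
  define m where "m = (\<Sum>i\<in>I. w i * a i)"
  have "0 \<le> (\<Sum>i\<in>I. w i * (a i - m)^2)"
    using assms by (intro sum_nonneg) auto
  also have "\<dots> = (\<Sum>i\<in>I. w i * (a i)^2) - 2 * m * (\<Sum>i\<in>I. w i * a i) + m^2 * (\<Sum>i\<in>I. w i)"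
    by (simp add: power2_diff algebra_simps sum.distrib sum_subtractf sum_distrib_left sum_distrib_right)
  finally show ?thesis using assms(3) by (simp add: m_def power2_eq_square)
qed

lemma jensen_norm_sq:
  fixes y :: "'i \<Rightarrow> 'a::real_normed_vector"
  assumes "finite I" "\<forall>i\<in>I. 0 \<le> w i" "(\<Sum>i\<in>I. w i) = 1"
  shows "(norm (\<Sum>i\<in>I. w i *\<^sub>R y i))^2 \<le> (\<Sum>i\<in>I. w i * (norm (y i))^2)"
proof -
  have "norm (\<Sum>i\<in>I. w i *\<^sub>R y i) \<le> (\<Sum>i\<in>I. w i * norm (y i))"
    using assms(2) by (intro order.trans[OF norm_sum]) (auto intro!: sum_mono)
  then have "(norm (\<Sum>i\<in>I. w i *\<^sub>R y i))^2 \<le> (\<Sum>i\<in>I. w i * norm (y i))^2"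
    by (intro power_mono) auto
  also have "\<dots> \<le> (\<Sum>i\<in>I. w i * (norm (y i))^2)" by (rule jensen_sq[OF assms])
  finally show ?thesis .
qed

lemma sq_identity:
  fixes a b :: "'a::real_inner"
  shows "(norm ((1-l) *\<^sub>R a + l *\<^sub>R b))^2 = (1-l)*(norm a)^2 + l*(norm b)^2 - l*(1-l)*(norm (a-b))^2"
  unfolding power2_norm_eq_inner
  by (simp add: inner_add_left inner_add_right inner_diff_left inner_diff_right inner_commute algebra_simps)

lemma averaged_sqne:
  fixes T :: "'a::real_inner \<Rightarrow> 'a"
  assumes "averaged_nonexpansive T"
  shows "\<exists>c>0. \<forall>x z. z \<in> Fix T \<longrightarrow> (norm (T x - z))^2 + c*(norm (x - T x))^2 \<le> (norm (x - z))^2"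
proof -
  obtain l N where l: "0 \<le> l" "l < 1" and N: "nonexpansive N" and T: "T = (\<lambda>x. (1 - l) *\<^sub>R x + l *\<^sub>R N x)"
    using assms unfolding averaged_nonexpansive_def by auto
  show ?thesis
  proof (intro exI[of _ "1-l"] conjI allI impI)
    show "0 < 1 - l" using l by simp
    fix x z assume z: "z \<in> Fix T"
    have Tz: "(1 - l) *\<^sub>R z + l *\<^sub>R N z = z" using z T by (simp add: Fix_def)
    have "l * (norm (N x - z))^2 \<le> l * (norm (x - z))^2"
    proof (cases "l = 0")
      case False
      from Tz have "l *\<^sub>R N z = l *\<^sub>R z" by (simp add: algebra_simps)
      with False have "N z = z" by simp
      then have "norm (N x - z) \<le> norm (x - z)" using N unfolding nonexpansive_def by metis
      then show ?thesis using l by (intro mult_left_mono power_mono) auto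
    qed simp
    have e1: "T x - z = (1-l) *\<^sub>R (x - z) + l *\<^sub>R (N x - z)" by (simp add: T algebra_simps)
    have e2: "x - T x = l *\<^sub>R ((x - z) - (N x - z))" by (simp add: T algebra_simps)
    have "(norm (T x - z))^2 = (1-l)*(norm (x-z))^2 + l*(norm (N x - z))^2 - l*(1-l)*(norm ((x - z) - (N x - z)))^2"
      unfolding e1 by (rule sq_identity)
    moreover have "(1-l)*(norm (x - T x))^2 = (1-l)*l^2*(norm ((x - z) - (N x - z)))^2"
      unfolding e2 using l by (simp add: power_mult_distrib)
    moreover have "(1-l)*l^2*(norm ((x - z) - (N x - z)))^2 \<le> l*(1-l)*(norm ((x - z) - (N x - z)))^2"
      using l by (intro mult_right_mono) (use mult_left_mono[of l 1 l] in \<open>auto simp: power2_eq_square\<close>)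
    ultimately show "(norm (T x - z))^2 + (1-l)*(norm (x - T x))^2 \<le> (norm (x - z))^2"
      using \<open>l * (norm (N x - z))^2 \<le> l * (norm (x - z))^2\<close> by (simp add: algebra_simps)
  qed
qed

theorem theorem6p1:
  fixes I :: "'i set"
    and T :: "'i \<Rightarrow> 'a::{real_inner, complete_space} \<Rightarrow> 'a"
    and \<omega> :: "'i \<Rightarrow> nat \<Rightarrow> real"
    and p :: nat
    and x :: "nat \<Rightarrow> 'a"
  assumes fin: "finite I"
    and avg: "\<forall>i\<in>I. averaged_nonexpansive (T i)"
    and blr: "\<forall>i\<in>I. bdd_lin_reg_op (T i)"
    and Z_ne: "(\<Inter>i\<in>I. Fix (T i)) \<noteq> {}"
    and fam: "bdd_lin_reg_family I (\<lambda>i. Fix (T i))"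
    and w_range: "\<forall>i\<in>I. \<forall>n. 0 \<le> \<omega> i n \<and> \<omega> i n \<le> 1"
    and w_sum: "\<forall>n. (\<Sum>i\<in>I. \<omega> i n) = 1"
    and w_plus: "(INF n. Min {\<omega> i n | i. i \<in> I \<and> \<omega> i n > 0}) > 0"
    and p_pos: "p \<ge> 1"
    and cover: "\<forall>n. (\<Union>k\<in>{n..<n+p}. {i\<in>I. \<omega> i k > 0}) = I"
    and iter: "\<forall>n. x (Suc n) = (\<Sum>i\<in>I. \<omega> i n *\<^sub>R T i (x n))"
  shows "\<exists>z\<in>(\<Inter>i\<in>I. Fix (T i)). converges_linearly x z"
proof -
  define Z where "Z = (\<Inter>i\<in>I. Fix (T i))"
  have Zne: "Z \<noteq> {}" using Z_ne Z_def by simp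
  have Ine: "I \<noteq> {}" using fam unfolding bdd_lin_reg_family_def by auto
  have Zcl: "closed Z" using fam unfolding bdd_lin_reg_family_def Z_def by auto
  have w0: "\<And>i n. i \<in> I \<Longrightarrow> 0 \<le> \<omega> i n" using w_range by auto
  have "\<forall>i\<in>I. \<exists>c>0. \<forall>y z. z \<in> Fix (T i) \<longrightarrow> (norm (T i y - z))^2 + c*(norm (y - T i y))^2 \<le> (norm (y - z))^2"
    using avg averaged_sqne by blast
  then obtain cf where cf: "\<And>i. i \<in> I \<Longrightarrow> cf i > 0"
    "\<And>i y z. i \<in> I \<Longrightarrow> z \<in> Fix (T i) \<Longrightarrow> (norm (T i y - z))^2 + cf i*(norm (y - T i y))^2 \<le> (norm (y - z))^2"
    by metis
  define c where "c = Min (cf ` I)"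
  have c_pos: "c > 0" using cf(1) fin Ine by (simp add: c_def)
  have c_le: "\<And>i. i \<in> I \<Longrightarrow> c \<le> cf i" using fin by (simp add: c_def)
  define D where "D n = (\<Sum>i\<in>I. \<omega> i n * (norm (x n - T i (x n)))^2)" for n
  have D0: "0 \<le> D n" for n unfolding D_def using w0 by (intro sum_nonneg) auto
  have fej1: "(norm (x (Suc n) - z))^2 + c * D n \<le> (norm (x n - z))^2" if z: "z \<in> Z" for n z
  proof -
    have "x (Suc n) - z = (\<Sum>i\<in>I. \<omega> i n *\<^sub>R (T i (x n) - z))"
      using iter w_sum by (simp add: scaleR_diff_right sum_subtractf scaleR_sum_left[symmetric])
    then have "(norm (x (Suc n) - z))^2 \<le> (\<Sum>i\<in>I. \<omega> i n * (norm (T i (x n) - z))^2)"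
      using jensen_norm_sq[OF fin _ w_sum[rule_format]] w0 by simp
    also have "\<dots> \<le> (\<Sum>i\<in>I. \<omega> i n * ((norm (x n - z))^2 - c * (norm (x n - T i (x n)))^2))"
    proof (intro sum_mono mult_left_mono)
      fix i assume i: "i \<in> I"
      have zi: "z \<in> Fix (T i)" using z i Z_def by auto
      have "c * (norm (x n - T i (x n)))^2 \<le> cf i * (norm (x n - T i (x n)))^2"
        using c_le[OF i] by (intro mult_right_mono) auto
      then show "(norm (T i (x n) - z))^2 \<le> (norm (x n - z))^2 - c * (norm (x n - T i (x n)))^2"
        using cf(2)[OF i zi, of "x n"] by linarith
    qed (use w0 in auto)
    also have "\<dots> = (\<Sum>i\<in>I. \<omega> i n * (norm (x n - z))^2 - c * (\<omega> i n * (norm (x n - T i (x n)))^2))"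
      by (rule sum.cong) (simp_all add: right_diff_distrib)
    also have "\<dots> = (\<Sum>i\<in>I. \<omega> i n) * (norm (x n - z))^2 - c * D n"
      unfolding sum_subtractf D_def sum_distrib_left sum_distrib_right ..
    also have "\<dots> = (norm (x n - z))^2 - c * D n" using w_sum by simp
    finally show ?thesis by simp
  qed
  have step: "norm (x (Suc n) - x n) \<le> sqrt (D n)" for n
  proof -
    have "x (Suc n) - x n = (\<Sum>i\<in>I. \<omega> i n *\<^sub>R (T i (x n) - x n))"
      using iter w_sum by (simp add: scaleR_diff_right sum_subtractf scaleR_sum_left[symmetric])
    then have "(norm (x (Suc n) - x n))^2 \<le> (\<Sum>i\<in>I. \<omega> i n * (norm (T i (x n) - x n))^2)"
      using jensen_norm_sq[OF fin _ w_sum[rule_format]] w0 by simp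
    also have "\<dots> = D n" by (simp add: D_def norm_minus_commute)
    finally show ?thesis by (rule real_le_rsqrt)
  qed
  have tele: "(norm (x (n+m) - z))^2 + c * (\<Sum>k\<in>{n..<n+m}. D k) \<le> (norm (x n - z))^2" if z: "z \<in> Z" for n m z
  proof (induction m)
    case (Suc m)
    have "(norm (x (n + Suc m) - z))^2 + c * (\<Sum>k\<in>{n..<n+Suc m}. D k)
       = (norm (x (Suc (n + m)) - z))^2 + c * D (n+m) + c * (\<Sum>k\<in>{n..<n+m}. D k)"
      by (simp add: algebra_simps)
    also have "\<dots> \<le> (norm (x (n+m) - z))^2 + c * (\<Sum>k\<in>{n..<n+m}. D k)"
      using fej1[OF z, of "n+m"] by simp
    finally show ?case using Suc by simp
  qed simp
  have fej: "norm (x (n+m) - z) \<le> norm (x n - z)" if z: "z \<in> Z" for n m z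
  proof -
    have "0 \<le> c * (\<Sum>k\<in>{n..<n+m}. D k)" using c_pos D0 by (intro mult_nonneg_nonneg sum_nonneg) auto
    then have "(norm (x (n+m) - z))^2 \<le> (norm (x n - z))^2" using tele[OF z, of n m] by linarith
    then show ?thesis by (rule power2_le_imp_le) auto
  qed
  obtain z0 where z0: "z0 \<in> Z" using Zne by auto
  define \<rho> where "\<rho> = norm (x 0 - z0) + norm z0 + 1"
  have rho_pos: "\<rho> > 0" unfolding \<rho>_def by (simp add: add_nonneg_pos)
  have bnd: "norm (x n) \<le> \<rho>" for n
  proof -
    have "norm (x n) \<le> norm (x n - z0) + norm z0" using norm_triangle_ineq[of "x n - z0" z0] by simp
    also have "norm (x n - z0) \<le> norm (x 0 - z0)" using fej[OF z0, of 0 n] by simp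
    finally show ?thesis unfolding \<rho>_def by simp
  qed
  have kfex: "\<forall>i\<in>I. \<exists>\<kappa>\<ge>0. \<forall>y. norm y \<le> \<rho> \<longrightarrow> infdist y (Fix (T i)) \<le> \<kappa> * norm (y - T i y)"
    using blr rho_pos unfolding bdd_lin_reg_op_def by blast
  obtain kf where kf: "\<And>i. i \<in> I \<Longrightarrow> kf i \<ge> 0"
    "\<And>i y. i \<in> I \<Longrightarrow> norm y \<le> \<rho> \<Longrightarrow> infdist y (Fix (T i)) \<le> kf i * norm (y - T i y)"
    using bchoice[OF kfex] by blast
  define K where "K = (\<Sum>i\<in>I. kf i)"
  have K0: "K \<ge> 0" unfolding K_def using kf(1) by (simp add: sum_nonneg)
  have kK: "kf i \<le> K" if "i \<in> I" for i
    unfolding K_def using kf(1) fin that by (intro member_le_sum) auto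
  obtain \<mu> where mu: "\<mu> > 0" "\<And>y. norm y \<le> \<rho> \<Longrightarrow> infdist y Z \<le> \<mu> * (MAX i\<in>I. infdist y (Fix (T i)))"
    using fam rho_pos unfolding bdd_lin_reg_family_def Z_def by blast
  define wp where "wp = (INF n. Min {\<omega> i n | i. i \<in> I \<and> \<omega> i n > 0})"
  have wp_pos: "wp > 0" using w_plus wp_def by simp
  have wp_le: "wp \<le> \<omega> i n" if i: "i \<in> I" and pos: "\<omega> i n > 0" for i n
  proof -
    define S where "S m = {\<omega> i m | i. i \<in> I \<and> \<omega> i m > 0}" for m
    have Sfin: "finite (S m)" for m
      by (rule finite_subset[of _ "(\<lambda>i. \<omega> i m) ` I"]) (auto simp: S_def fin)
    have Sne: "S m \<noteq> {}" for m
    proof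
      assume "S m = {}"
      then have "\<forall>i\<in>I. \<omega> i m \<le> 0" by (auto simp: S_def)
      then have "(\<Sum>i\<in>I. \<omega> i m) \<le> 0" by (simp add: sum_nonpos)
      with w_sum show False by simp
    qed
    have "bdd_below (range (\<lambda>m. Min (S m)))"
    proof (rule bdd_belowI[of _ 0])
      fix a assume "a \<in> range (\<lambda>m. Min (S m))"
      then obtain m where "a = Min (S m)" by auto
      have "\<forall>b\<in>S m. 0 \<le> b" by (auto simp: S_def)
      then show "0 \<le> a" using Min_ge_iff[OF Sfin Sne, of 0 m] \<open>a = Min (S m)\<close> by simp
    qed
    then have "wp \<le> Min (S n)" unfolding wp_def S_def[symmetric] by (rule cINF_lower) simp
    also have "\<dots> \<le> \<omega> i n" using Sfin by (intro Min_le) (auto simp: S_def i pos)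
    finally show ?thesis .
  qed
  define M where "M = K / sqrt wp + real p"
  have M_pos: "M > 0" unfolding M_def using K0 wp_pos p_pos by (simp add: add_nonneg_pos)
  have key: "(infdist (x n) Z)^2 \<le> (\<mu> * M)^2 * (\<Sum>k\<in>{n..<n+p}. D k)" for n
  proof -
    define W where "W = (\<Sum>k\<in>{n..<n+p}. D k)"
    have W0: "0 \<le> W" unfolding W_def using D0 by (simp add: sum_nonneg)
    have DW: "D k \<le> W" if "k \<in> {n..<n+p}" for k
      unfolding W_def using D0 that by (intro member_le_sum) auto
    have dist_n: "norm (x (n+j) - x n) \<le> real j * sqrt W" if "j \<le> p" for j
      using that
    proof (induction j)
      case (Suc j)
      have "norm (x (n + Suc j) - x n) \<le> norm (x (Suc (n+j)) - x (n+j)) + norm (x (n+j) - x n)"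
        using norm_triangle_ineq[of "x (Suc (n+j)) - x (n+j)" "x (n+j) - x n"] by simp
      also have "norm (x (Suc (n+j)) - x (n+j)) \<le> sqrt W"
      proof -
        have "n+j \<in> {n..<n+p}" using Suc.prems by simp
        then have "sqrt (D (n+j)) \<le> sqrt W" using DW by simp
        then show ?thesis using step[of "n+j"] by linarith
      qed
      finally show ?case using Suc by (simp add: algebra_simps)
    qed simp
    have di: "infdist (x n) (Fix (T i)) \<le> M * sqrt W" if i: "i \<in> I" for i
    proof -
      have "i \<in> (\<Union>k\<in>{n..<n+p}. {i\<in>I. \<omega> i k > 0})" using cover i by simp
      then obtain k where k: "k \<in> {n..<n+p}" "\<omega> i k > 0" by auto
      have "wp * (norm (x k - T i (x k)))^2 \<le> \<omega> i k * (norm (x k - T i (x k)))^2"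
        using wp_le[OF i k(2)] by (intro mult_right_mono) auto
      also have "\<dots> \<le> D k" unfolding D_def using fin i w0
        by (intro member_le_sum[where f = "\<lambda>i. \<omega> i k * (norm (x k - T i (x k)))^2"]) auto
      also have "\<dots> \<le> W" using DW k(1) .
      finally have "(norm (x k - T i (x k)))^2 \<le> W / wp" using wp_pos by (simp add: field_simps)
      then have "norm (x k - T i (x k)) \<le> sqrt (W / wp)"
        by (rule real_le_rsqrt)
      then have r: "norm (x k - T i (x k)) \<le> sqrt W / sqrt wp"
        by (simp add: real_sqrt_divide)
      have "infdist (x n) (Fix (T i)) \<le> infdist (x k) (Fix (T i)) + dist (x n) (x k)"
        by (rule infdist_triangle)
      also have "infdist (x k) (Fix (T i)) \<le> K * (sqrt W / sqrt wp)"
      proof -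
        have "infdist (x k) (Fix (T i)) \<le> kf i * norm (x k - T i (x k))" using kf(2)[OF i bnd] .
        also have "\<dots> \<le> K * (sqrt W / sqrt wp)"
          using kK[OF i] kf(1)[OF i] r K0 by (intro mult_mono) auto
        finally show ?thesis .
      qed
      also have "dist (x n) (x k) \<le> real p * sqrt W"
      proof -
        define j where "j = k - n"
        have j: "k = n + j" "j \<le> p" using k(1) by (auto simp: j_def)
        have "real j * sqrt W \<le> real p * sqrt W" using j(2) using W0 by (intro mult_right_mono) auto
        then show ?thesis using dist_n[OF j(2)] j(1) by (simp add: dist_norm norm_minus_commute)
      qed
      finally show ?thesis unfolding M_def by (simp add: algebra_simps)
    qed
    have "(MAX i\<in>I. infdist (x n) (Fix (T i))) \<le> M * sqrt W"
      using fin Ine di by (simp add: Max_le_iff)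
    then have "infdist (x n) Z \<le> \<mu> * (M * sqrt W)"
      using mu(2)[OF bnd] mu(1) by (meson mult_left_mono less_imp_le order.trans)
    then have "(infdist (x n) Z)^2 \<le> (\<mu> * (M * sqrt W))^2"
      by (intro power_mono) (auto simp: infdist_nonneg)
    also have "\<dots> = (\<mu> * M)^2 * W" using W0 by (simp add: power_mult_distrib)
    finally show ?thesis unfolding W_def .
  qed
  define d where "d n = infdist (x n) Z" for n
  have d0: "0 \<le> d n" for n by (simp add: d_def infdist_nonneg)
  define \<beta> where "\<beta> = c / (\<mu> * M)^2"
  have beta_pos: "\<beta> > 0" unfolding \<beta>_def using c_pos mu(1) M_pos by simp
  have contr: "(d (n+p))^2 \<le> (1 - \<beta>) * (d n)^2" for n
  proof -
    define W where "W = (\<Sum>k\<in>{n..<n+p}. D k)"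
    have "(d n)^2 \<le> (\<mu> * M)^2 * W" using key[of n] by (simp add: d_def W_def)
    then have bW: "\<beta> * (d n)^2 \<le> c * W"
      unfolding \<beta>_def using mu(1) M_pos c_pos by (simp add: field_simps)
    have "(d (n+p))^2 + \<beta> * (d n)^2 \<le> (d n)^2"
      unfolding d_def
    proof (rule infdist_ge_sq[OF Zne])
      show "0 \<le> (infdist (x (n+p)) Z)^2 + \<beta> * (infdist (x n) Z)^2"
        using beta_pos by (simp add: infdist_nonneg)
      fix z assume z: "z \<in> Z"
      have "(infdist (x (n+p)) Z)^2 \<le> (norm (x (n+p) - z))^2"
        by (intro power_mono) (auto simp: infdist_nonneg infdist_le[OF z, of "x (n+p)", unfolded dist_norm])
      then show "(infdist (x (n+p)) Z)^2 + \<beta> * (infdist (x n) Z)^2 \<le> (dist (x n) z)^2"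
        using tele[OF z, of n p] bW by (simp add: d_def W_def dist_norm)
    qed
    then show ?thesis by (simp add: algebra_simps)
  qed
  define Q where "Q = sqrt (max (1/4) (1 - \<beta>))"
  have Q_pos: "Q > 0" and Q_lt: "Q < 1" unfolding Q_def using beta_pos by auto
  have dQ: "d (n+p) \<le> Q * d n" for n
  proof -
    have "(d (n+p))^2 \<le> (max (1/4) (1 - \<beta>)) * (d n)^2"
    proof -
      have "(1 - \<beta>) * (d n)^2 \<le> (max (1/4) (1 - \<beta>)) * (d n)^2"
        by (intro mult_right_mono) auto
      then show ?thesis using contr[of n] by linarith
    qed
    also have "\<dots> = (Q * d n)^2" unfolding Q_def by (simp add: power_mult_distrib)
    finally have h: "(d (n+p))^2 \<le> (Q * d n)^2" .
    show ?thesis by (rule power2_le_imp_le[OF h]) (use Q_pos d0[of n] in simp)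
  qed
  have dmono: "d m \<le> d n" if "n \<le> m" for m n
  proof -
    define j where "j = m - n"
    have m: "m = n + j" using that by (simp add: j_def)
    show ?thesis unfolding d_def
    proof (rule infdist_ge[OF Zne])
      fix z assume z: "z \<in> Z"
      have "infdist (x m) Z \<le> dist (x m) z" by (rule infdist_le[OF z])
      also have "\<dots> \<le> dist (x n) z" using fej[OF z, of n j] unfolding m dist_norm .
      finally show "infdist (x m) Z \<le> dist (x n) z" .
    qed
  qed
  have dpow: "d n \<le> Q ^ (n div p) * d 0" for n
  proof (induction n rule: less_induct)
    case (less n)
    show ?case
    proof (cases "n < p")
      case True
      then show ?thesis using dmono[of 0 n] by simp
    next
      case False
      define m where "m = n - p"
      have m: "n = m + p" using False by (simp add: m_def)
      have "m < n" using m p_pos by simp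
      have "n div p = Suc (m div p)" using m p_pos by simp
      have "d n \<le> Q * d m" using dQ[of m] m by simp
      also have "\<dots> \<le> Q * (Q ^ (m div p) * d 0)" using less[OF \<open>m < n\<close>] Q_pos by simp
      finally show ?thesis using \<open>n div p = Suc (m div p)\<close> by simp
    qed
  qed
  define q where "q = root p Q"
  have p0: "0 < p" using p_pos by simp
  have q_pos: "q > 0" and q_lt: "q < 1" unfolding q_def using Q_pos Q_lt p0 by auto
  have qp: "q ^ p = Q" unfolding q_def using p0 Q_pos by simp
  have Qq: "Q ^ (n div p) * Q \<le> q ^ n" for n
  proof -
    have "Q ^ (n div p) * Q = q ^ (p * Suc (n div p))" by (simp only: power_mult qp power_Suc2)
    also have "\<dots> \<le> q ^ n"
    proof (rule power_decreasing)
      have e: "n div p * p + n mod p = n" by (rule div_mult_mod_eq)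
      have l: "n mod p < p" using p0 by (rule mod_less_divisor)
      have "p * Suc (n div p) = n div p * p + p" by simp
      then show "n \<le> p * Suc (n div p)" using e l by linarith
    qed (use q_pos q_lt in auto)
    finally show ?thesis .
  qed
  define C where "C = d 0 / Q"
  have C0: "C \<ge> 0" unfolding C_def using d0 Q_pos by simp
  have dC: "d n \<le> C * q ^ n" for n
  proof -
    have "d n \<le> Q ^ (n div p) * d 0" by (rule dpow)
    also have "\<dots> = (Q ^ (n div p) * Q) * C" unfolding C_def using Q_pos by simp
    also have "\<dots> \<le> q ^ n * C" using Qq C0 by (intro mult_right_mono) auto
    finally show ?thesis by (simp add: mult.commute)
  qed
  have dist2: "dist (x m) (x n) \<le> 2 * d n" if "n \<le> m" for m n
  proof -
    define j where "j = m - n"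
    have m: "m = n + j" using that by (simp add: j_def)
    have "dist (x m) (x n) / 2 \<le> d n" unfolding d_def
    proof (rule infdist_ge[OF Zne])
      fix z assume z: "z \<in> Z"
      have "dist (x m) (x n) \<le> dist (x m) z + dist (x n) z" by (rule dist_triangle2)
      also have "dist (x m) z \<le> dist (x n) z" using fej[OF z, of n j] unfolding m dist_norm .
      finally show "dist (x m) (x n) / 2 \<le> dist (x n) z" by simp
    qed
    then show ?thesis by simp
  qed
  have lim0: "(\<lambda>n. C * q ^ n) \<longlonglongrightarrow> 0"
    using q_pos q_lt by (auto intro!: tendsto_eq_intros LIMSEQ_power_zero)
  have "Cauchy x"
  proof (rule metric_CauchyI)
    fix e :: real assume e: "e > 0"
    have "eventually (\<lambda>n. C * q ^ n < e / 2) sequentially"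
      using order_tendstoD(2)[OF lim0, of "e/2"] e by simp
    then obtain N where N: "\<And>n. n \<ge> N \<Longrightarrow> C * q ^ n < e / 2" by (auto simp: eventually_sequentially)
    show "\<exists>N. \<forall>m\<ge>N. \<forall>n\<ge>N. dist (x m) (x n) < e"
    proof (intro exI allI impI)
      fix m n assume mn: "N \<le> m" "N \<le> n"
      have a: "dist (x a) (x b) < e" if "b \<le> a" "N \<le> b" for a b
        using dist2[OF that(1)] dC[of b] N[OF that(2)] by linarith
      show "dist (x m) (x n) < e"
        using a[of n m] a[of m n] mn dist_commute[of "x m" "x n"] by (cases "n \<le> m") auto
    qed
  qed
  then obtain xb where xb: "x \<longlonglongrightarrow> xb" using Cauchy_convergent_iff convergent_def by blast
  have dxb: "norm (x n - xb) \<le> 2 * d n" for n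
  proof -
    have "(\<lambda>m. norm (x m - x n)) \<longlonglongrightarrow> norm (xb - x n)" using xb by (intro tendsto_intros)
    moreover have "\<forall>m\<ge>n. norm (x m - x n) \<le> 2 * d n" using dist2 by (simp add: dist_norm)
    ultimately have "norm (xb - x n) \<le> 2 * d n" by (rule Lim_bounded)
    then show ?thesis by (simp add: norm_minus_commute)
  qed
  have "infdist xb Z \<le> 0"
  proof (rule LIMSEQ_le_const)
    show "(\<lambda>n. 3 * (C * q ^ n)) \<longlonglongrightarrow> 0" using tendsto_mult_right_zero[OF lim0] by simp
    show "\<exists>N. \<forall>n\<ge>N. infdist xb Z \<le> 3 * (C * q ^ n)"
    proof (intro exI allI impI)
      fix n :: nat
      have "infdist xb Z \<le> infdist (x n) Z + dist xb (x n)" by (rule infdist_triangle)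
      also have "\<dots> \<le> 3 * d n" using dxb[of n] by (simp add: d_def dist_norm norm_minus_commute)
      also have "\<dots> \<le> 3 * (C * q ^ n)" using dC[of n] by simp
      finally show "infdist xb Z \<le> 3 * (C * q ^ n)" .
    qed
  qed
  then have "infdist xb Z = 0" using infdist_nonneg[of xb Z] by linarith
  then have xbZ: "xb \<in> Z" using in_closed_iff_infdist_zero[OF Zcl Zne] by simp
  have "\<forall>n. norm (x n - xb) \<le> (2 * C) * q ^ n"
  proof
    fix n show "norm (x n - xb) \<le> (2 * C) * q ^ n" using dxb[of n] dC[of n] by simp
  qed
  then have "converges_linearly x xb"
    unfolding converges_linearly_def using C0 q_pos q_lt
    by (intro exI[of _ "2*C"] conjI exI[of _ q]) auto
  then show ?thesis using xbZ Z_def by blast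
qed

end
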